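(* Fix $p\in[0,\infty]$, a dynamic monetary risk measure $(R_t)_{t=0}^{T-1}$, a dynamic monetary utility function $(U_t)_{t=0}^{T-1}$ and $\eta_t\in L^0(\mathcal{F}_t)$, $\eta_t>0$; let $W_t$ and the cost-of-capital margins $V_t$ be as defined in the context. Let $X,\widetilde X$ be $\mathbb{F}$-adapted cash flows with $X_s,\widetilde X_s\in L^p(\mathcal{F}_s)$ for every $s$. (i) Let $t<T$, $a\in L^p_+(\mathcal{F}_t)$, let $b=(b_1,\dots,b_T)$ be a vector with components in $L^p(\mathcal{F}_t)$, and suppose $X_u\le\widetilde X_u$ for each $u$. Then $$V_t(aX)=aV_t(X),\qquad V_t(X+b)=V_t(X)+\sum_{u=t+1}^T b_u,\qquad V_t(X)\le V_t(\widetilde X).$$ (ii) (Time consistency) For every pair of times $s\le t$, if $(X_u)_{u=1}^t=(\widetilde X_u)_{u=1}^t$ and $V_t(X)\le V_t(\widetilde X)$, then $V_s(X)\le V_s(\widetilde X)$.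
   Context: Let $T\ge 1$ and $(\Omega,\mathcal{F},\mathbb{F},\mathbb{P})$ a filtered probability space with $\mathbb{F}=(\mathcal{F}_t)_{t=0}^T$, $\{\emptyset,\Omega\}=\mathcal{F}_0\subseteq\dots\subseteq\mathcal{F}_T=\mathcal{F}$. $L^0(\mathcal{F}_t)$: real $\mathcal{F}_t$-measurable random variables; $L^p(\mathcal{F}_t)$ for $p\in(0,\infty)$: those with $\mathbb{E}|Y|^p<\infty$; $L^\infty(\mathcal{F}_t)$: essentially bounded ones; $L^p_+$: nonnegative elements. (In)equalities are a.s.; $x_+=\max(x,0)$. A dynamic monetary risk measure: maps $R_t:L^p(\mathcal{F}_{t+1})\to L^p(\mathcal{F}_t)$, $t=0,\dots,T-1$, with $R_t(Y+\lambda)=R_t(Y)-\lambda$ ($\lambda\in L^p(\mathcal{F}_t)$), $Y\le\widetilde Y\Rightarrow R_t(Y)\ge R_t(\widetilde Y)$, $R_t(cY)=cR_t(Y)$ ($c\in L^p_+(\mathcal{F}_t)$). A dynamic monetary utility function: maps $U_t:L^p(\mathcal{F}_{t+1})\to L^p(\mathcal{F}_t)$ with $U_t(Y+\lambda)=U_t(Y)+\lambda$, $Y\le\widetilde Y\Rightarrow U_t(Y)\le U_t(\widetilde Y)$, $U_t(cY)=cU_t(Y)$. Define $W_t(Y):=R_t(-Y)-\frac{1}{1+\eta_t}U_t((R_t(-Y)-Y)_+)$ for $Y\in L^p(\mathcal{F}_{t+1})$, and for an adapted cash flow $X=(X_t)_{t=1}^T$ with $X_t\in L^p(\mathcal{F}_t)$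 the cost-of-capital margins $V_t(X):=W_t\circ\dots\circ W_{T-1}(X_{t+1}+\dots+X_T)$ for $t=0,\dots,T-1$ and $V_T(X):=0$. Here $aX=(aX_u)_u$ and $X+b=(X_u+b_u)_u$. *)

theory Defs
  imports "HOL-Probability.Probability"
begin

definition finite_filtration :: "'a measure \<Rightarrow> (nat \<Rightarrow> 'a measure) \<Rightarrow> nat \<Rightarrow> bool" where
  "finite_filtration M F T \<longleftrightarrow>
     (\<forall>t\<le>T. space (F t) = space M \<and> sets (F t) \<subseteq> sets M) \<and>
     (\<forall>s t. s \<le> t \<and> t \<le> T \<longrightarrow> sets (F s) \<subseteq> sets (F t)) \<and>
     sets (F 0) = {{}, space M} \<and>
     sets (F T) = sets M"

definition Lp :: "'a measure \<Rightarrow> 'a measure \<Rightarrow> ennreal \<Rightarrow> ('a \<Rightarrow> real) set" where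
  "Lp M N p = {Y. Y \<in> borel_measurable N \<and>
     (if p = 0 then True
      else if p = \<infinity> then (\<exists>C. AE x in M. \<bar>Y x\<bar> \<le> C)
      else integrable M (\<lambda>x. \<bar>Y x\<bar> powr enn2real p))}"

definition Lp_pos :: "'a measure \<Rightarrow> 'a measure \<Rightarrow> ennreal \<Rightarrow> ('a \<Rightarrow> real) set" where
  "Lp_pos M N p = {Y. Y \<in> Lp M N p \<and> (AE x in M. 0 \<le> Y x)}"

text \<open>Positive homogeneity is required whenever
  the product c*Y is again in L^p(F(t+1)) (so that R t (c*Y) is defined).\<close>
definition dyn_risk_measure ::
  "'a measure \<Rightarrow> (nat \<Rightarrow> 'a measure) \<Rightarrow> nat \<Rightarrow> ennreal \<Rightarrow>
   (nat \<Rightarrow> ('a \<Rightarrow> real) \<Rightarrow> ('a \<Rightarrow> real)) \<Rightarrow> bool" where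
  "dyn_risk_measure M F T p R \<longleftrightarrow> (\<forall>t<T.
     (\<forall>Y\<in>Lp M (F (Suc t)) p. R t Y \<in> Lp M (F t) p) \<and>
     (\<forall>Y\<in>Lp M (F (Suc t)) p. \<forall>l\<in>Lp M (F t) p.
        AE x in M. R t (\<lambda>y. Y y + l y) x = R t Y x - l x) \<and>
     (\<forall>Y\<in>Lp M (F (Suc t)) p. \<forall>Y'\<in>Lp M (F (Suc t)) p.
        (AE x in M. Y x \<le> Y' x) \<longrightarrow> (AE x in M. R t Y x \<ge> R t Y' x)) \<and>
     (\<forall>Y\<in>Lp M (F (Suc t)) p. \<forall>c\<in>Lp_pos M (F t) p.
        (\<lambda>y. c y * Y y) \<in> Lp M (F (Suc t)) p \<longrightarrow>
        (AE x in M. R t (\<lambda>y. c y * Y y) x = c x * R t Y x)))"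

definition dyn_utility ::
  "'a measure \<Rightarrow> (nat \<Rightarrow> 'a measure) \<Rightarrow> nat \<Rightarrow> ennreal \<Rightarrow>
   (nat \<Rightarrow> ('a \<Rightarrow> real) \<Rightarrow> ('a \<Rightarrow> real)) \<Rightarrow> bool" where
  "dyn_utility M F T p U \<longleftrightarrow> (\<forall>t<T.
     (\<forall>Y\<in>Lp M (F (Suc t)) p. U t Y \<in> Lp M (F t) p) \<and>
     (\<forall>Y\<in>Lp M (F (Suc t)) p. \<forall>l\<in>Lp M (F t) p.
        AE x in M. U t (\<lambda>y. Y y + l y) x = U t Y x + l x) \<and>
     (\<forall>Y\<in>Lp M (F (Suc t)) p. \<forall>Y'\<in>Lp M (F (Suc t)) p.
        (AE x in M. Y x \<le> Y' x) \<longrightarrow> (AE x in M. U t Y x \<le> U t Y' x)) \<and>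
     (\<forall>Y\<in>Lp M (F (Suc t)) p. \<forall>c\<in>Lp_pos M (F t) p.
        (\<lambda>y. c y * Y y) \<in> Lp M (F (Suc t)) p \<longrightarrow>
        (AE x in M. U t (\<lambda>y. c y * Y y) x = c x * U t Y x)))"

definition CoC_W ::
  "(nat \<Rightarrow> ('a \<Rightarrow> real) \<Rightarrow> ('a \<Rightarrow> real)) \<Rightarrow> (nat \<Rightarrow> ('a \<Rightarrow> real) \<Rightarrow> ('a \<Rightarrow> real)) \<Rightarrow>
   (nat \<Rightarrow> 'a \<Rightarrow> real) \<Rightarrow> nat \<Rightarrow> ('a \<Rightarrow> real) \<Rightarrow> ('a \<Rightarrow> real)" where
  "CoC_W R U \<eta> t Y = (\<lambda>x. R t (\<lambda>y. - Y y) x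
      - 1 / (1 + \<eta> t x) * U t (\<lambda>y. max (R t (\<lambda>z. - Y z) y - Y y) 0) x)"

text \<open>V_t(X) = W_t \<circ> ... \<circ> W_{T-1}(X_{t+1} + ... + X_T); for t = T this is the empty
  composition applied to the empty sum, i.e. V_T(X) = 0.\<close>
definition CoC_V ::
  "(nat \<Rightarrow> ('a \<Rightarrow> real) \<Rightarrow> ('a \<Rightarrow> real)) \<Rightarrow> (nat \<Rightarrow> ('a \<Rightarrow> real) \<Rightarrow> ('a \<Rightarrow> real)) \<Rightarrow>
   (nat \<Rightarrow> 'a \<Rightarrow> real) \<Rightarrow> nat \<Rightarrow> (nat \<Rightarrow> 'a \<Rightarrow> real) \<Rightarrow> nat \<Rightarrow> ('a \<Rightarrow> real)" where
  "CoC_V R U \<eta> T X t =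
     foldr (CoC_W R U \<eta>) [t..<T] (\<lambda>x. \<Sum>u\<in>{Suc t..T}. X u x)"

end

theory Submission
  imports Defs
begin

locale coc =
  fixes M :: "'a measure" and F :: "nat \<Rightarrow> 'a measure" and T :: nat and p :: ennreal
    and R U :: "nat \<Rightarrow> ('a \<Rightarrow> real) \<Rightarrow> ('a \<Rightarrow> real)"
    and \<eta> :: "nat \<Rightarrow> 'a \<Rightarrow> real"
  assumes FF: "finite_filtration M F T"
    and RR: "dyn_risk_measure M F T p R"
    and UU: "dyn_utility M F T p U"
    and ETA: "\<forall>t<T. \<eta> t \<in> borel_measurable (F t) \<and> (AE x in M. \<eta> t x > 0)"
begin

abbreviation L where "L k \<equiv> Lp M (F k) p"

lemma meas_sub:
  assumes "k \<le> j" "j \<le> T" "f \<in> borel_measurable (F k)"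
  shows "f \<in> borel_measurable (F j)"
proof -
  have "subalgebra (F j) (F k)" using FF assms unfolding finite_filtration_def subalgebra_def
    by (metis le_trans)
  then show ?thesis using measurable_from_subalg assms(3) by blast
qed

lemma meas_M:
  assumes "k \<le> T" "f \<in> borel_measurable (F k)"
  shows "f \<in> borel_measurable M"
proof -
  have "subalgebra M (F k)" using FF assms unfolding finite_filtration_def subalgebra_def
    by metis
  then show ?thesis using measurable_from_subalg assms(2) by blast
qed

lemma L_meas[measurable_dest]: "Y \<in> L k \<Longrightarrow> Y \<in> borel_measurable (F k)"
  unfolding Lp_def by auto

lemma L_dom:
  assumes k: "k \<le> T" and Z: "Z \<in> borel_measurable (F k)" and Y: "Y \<in> L k"
    and ae: "AE x in M. \<bar>Z x\<bar> \<le> \<bar>Y x\<bar>"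
  shows "Z \<in> L k"
proof -
  consider "p = 0" | "p = \<infinity>" | "p \<noteq> 0" "p \<noteq> \<infinity>" by blast
  then show ?thesis
  proof cases
    case 1 then show ?thesis using Z unfolding Lp_def by auto
  next
    case 2
    then obtain C where "AE x in M. \<bar>Y x\<bar> \<le> C" using Y unfolding Lp_def by auto
    with ae have "AE x in M. \<bar>Z x\<bar> \<le> C" by eventually_elim auto
    then show ?thesis using Z 2 unfolding Lp_def by auto
  next
    case 3
    let ?r = "enn2real p"
    have I: "integrable M (\<lambda>x. \<bar>Y x\<bar> powr ?r)" using Y 3 unfolding Lp_def by auto
    have m: "Z \<in> borel_measurable M" using meas_M[OF k Z] .
    have "integrable M (\<lambda>x. \<bar>Z x\<bar> powr ?r)"
    proof (rule Bochner_Integration.integrable_bound[OF I])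
      show "(\<lambda>x. \<bar>Z x\<bar> powr ?r) \<in> borel_measurable M" using m by measurable
      show "AE x in M. norm (\<bar>Z x\<bar> powr ?r) \<le> norm (\<bar>Y x\<bar> powr ?r)"
        using ae by eventually_elim (simp add: powr_mono2)
    qed
    then show ?thesis using Z 3 unfolding Lp_def by auto
  qed
qed

lemma L_add:
  assumes k: "k \<le> T" and Y: "Y \<in> L k" and Z: "Z \<in> L k"
  shows "(\<lambda>x. Y x + Z x) \<in> L k"
proof -
  have mY: "Y \<in> borel_measurable (F k)" and mZ: "Z \<in> borel_measurable (F k)"
    using Y Z by (auto simp: Lp_def)
  have m: "(\<lambda>x. Y x + Z x) \<in> borel_measurable (F k)" using mY mZ by measurable
  consider "p = 0" | "p = \<infinity>" | "p \<noteq> 0" "p \<noteq> \<infinity>" by blast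
  then show ?thesis
  proof cases
    case 1 then show ?thesis using m unfolding Lp_def by auto
  next
    case 2
    then obtain C D where "AE x in M. \<bar>Y x\<bar> \<le> C" "AE x in M. \<bar>Z x\<bar> \<le> D"
      using Y Z unfolding Lp_def by auto
    then have "AE x in M. \<bar>Y x + Z x\<bar> \<le> C + D" by eventually_elim auto
    then show ?thesis using m 2 unfolding Lp_def by auto
  next
    case 3
    let ?r = "enn2real p"
    have I: "integrable M (\<lambda>x. 2 powr ?r * (\<bar>Y x\<bar> powr ?r + \<bar>Z x\<bar> powr ?r))"
      using Y Z 3 unfolding Lp_def by auto
    have mm: "(\<lambda>x. Y x + Z x) \<in> borel_measurable M" using meas_M[OF k m] .
    have "integrable M (\<lambda>x. \<bar>Y x + Z x\<bar> powr ?r)"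
    proof (rule Bochner_Integration.integrable_bound[OF I])
      show "(\<lambda>x. \<bar>Y x + Z x\<bar> powr ?r) \<in> borel_measurable M" using mm by measurable
      show "AE x in M. norm (\<bar>Y x + Z x\<bar> powr ?r) \<le> norm (2 powr ?r * (\<bar>Y x\<bar> powr ?r + \<bar>Z x\<bar> powr ?r))"
      proof (rule AE_I2)
        fix x
        have r0: "0 \<le> ?r" by simp
        define m where "m = max \<bar>Y x\<bar> \<bar>Z x\<bar>"
        have "\<bar>Y x + Z x\<bar> powr ?r \<le> (2 * m) powr ?r"
          by (rule powr_mono2[OF r0]) (auto simp: m_def)
        also have "\<dots> = 2 powr ?r * m powr ?r" by (simp add: powr_mult m_def)
        also have "m powr ?r \<le> \<bar>Y x\<bar> powr ?r + \<bar>Z x\<bar> powr ?r"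
          by (auto simp: m_def max_def)
        then have "2 powr ?r * m powr ?r \<le> 2 powr ?r * (\<bar>Y x\<bar> powr ?r + \<bar>Z x\<bar> powr ?r)"
          by (simp add: mult_left_mono)
        finally show "norm (\<bar>Y x + Z x\<bar> powr ?r) \<le> norm (2 powr ?r * (\<bar>Y x\<bar> powr ?r + \<bar>Z x\<bar> powr ?r))"
          by simp
      qed
    qed
    then show ?thesis using m 3 unfolding Lp_def by auto
  qed
qed

lemma L_lift: "k \<le> j \<Longrightarrow> j \<le> T \<Longrightarrow> Y \<in> L k \<Longrightarrow> Y \<in> L j"
  unfolding Lp_def using meas_sub by auto

lemma L_neg: "k \<le> T \<Longrightarrow> Y \<in> L k \<Longrightarrow> (\<lambda>x. - Y x) \<in> L k"
  by (rule L_dom[where Y=Y]) (auto, measurable)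

lemma L_abs: "k \<le> T \<Longrightarrow> Y \<in> L k \<Longrightarrow> (\<lambda>x. \<bar>Y x\<bar>) \<in> L k"
  by (rule L_dom[where Y=Y]) (auto, measurable)

lemma L_ae: "k \<le> T \<Longrightarrow> Z \<in> borel_measurable (F k) \<Longrightarrow> Y \<in> L k \<Longrightarrow> AE x in M. Z x = Y x \<Longrightarrow> Z \<in> L k"
  by (rule L_dom[where Y=Y]) (auto elim!: eventually_mono)

lemma L_zero: "(\<lambda>x. 0) \<in> L k"
  unfolding Lp_def by auto

lemma L_diff: "k \<le> T \<Longrightarrow> Y \<in> L k \<Longrightarrow> Z \<in> L k \<Longrightarrow> (\<lambda>x. Y x - Z x) \<in> L k"
  using L_add[OF _ _ L_neg, of k Y Z] by simp

lemma L_sum: assumes k: "k \<le> T" shows "finite A \<Longrightarrow> (\<forall>u\<in>A. f u \<in> L k) \<Longrightarrow> (\<lambda>x. \<Sum>u\<in>A. f u x) \<in> L k"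
proof (induction A rule: finite_induct)
  case empty then show ?case using L_zero by simp
next
  case (insert a A)
  then show ?case using L_add[OF k, of "f a" "\<lambda>x. \<Sum>u\<in>A. f u x"] by simp
qed

lemma L_max0: "k \<le> T \<Longrightarrow> Y \<in> L k \<Longrightarrow> (\<lambda>x. max (Y x) 0) \<in> L k"
  by (rule L_dom[where Y=Y]) (auto, measurable)

lemma L_min: "k \<le> T \<Longrightarrow> Y \<in> L k \<Longrightarrow> Z \<in> L k \<Longrightarrow> (\<lambda>x. min (Y x) (Z x)) \<in> L k"
  by (rule L_dom[where Y="\<lambda>x. \<bar>Y x\<bar> + \<bar>Z x\<bar>"]) (auto simp: L_add L_abs, measurable)

lemma R_L: "t < T \<Longrightarrow> Y \<in> L (Suc t) \<Longrightarrow> R t Y \<in> L t"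
  using RR unfolding dyn_risk_measure_def by blast
lemma R_trans: "t < T \<Longrightarrow> Y \<in> L (Suc t) \<Longrightarrow> l \<in> L t \<Longrightarrow> AE x in M. R t (\<lambda>y. Y y + l y) x = R t Y x - l x"
  using RR unfolding dyn_risk_measure_def by blast
lemma R_mono: "t < T \<Longrightarrow> Y \<in> L (Suc t) \<Longrightarrow> Y' \<in> L (Suc t) \<Longrightarrow> AE x in M. Y x \<le> Y' x \<Longrightarrow> AE x in M. R t Y x \<ge> R t Y' x"
  using RR unfolding dyn_risk_measure_def by blast
lemma R_hom: "t < T \<Longrightarrow> Y \<in> L (Suc t) \<Longrightarrow> c \<in> Lp_pos M (F t) p \<Longrightarrow> (\<lambda>y. c y * Y y) \<in> L (Suc t) \<Longrightarrow> AE x in M. R t (\<lambda>y. c y * Y y) x = c x * R t Y x"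
  using RR unfolding dyn_risk_measure_def by blast
lemma R_cong: assumes "t < T" "Y \<in> L (Suc t)" "Y' \<in> L (Suc t)" "AE x in M. Y x = Y' x"
  shows "AE x in M. R t Y x = R t Y' x"
proof -
  have "AE x in M. R t Y x \<ge> R t Y' x" using assms by (intro R_mono) (auto elim: eventually_mono)
  moreover have "AE x in M. R t Y' x \<ge> R t Y x" using assms by (intro R_mono) (auto elim: eventually_mono)
  ultimately show ?thesis by eventually_elim auto
qed

lemma U_L: "t < T \<Longrightarrow> Y \<in> L (Suc t) \<Longrightarrow> U t Y \<in> L t"
  using UU unfolding dyn_utility_def by blast
lemma U_trans: "t < T \<Longrightarrow> Y \<in> L (Suc t) \<Longrightarrow> l \<in> L t \<Longrightarrow> AE x in M. U t (\<lambda>y. Y y + l y) x = U t Y x + l x"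
  using UU unfolding dyn_utility_def by blast
lemma U_mono: "t < T \<Longrightarrow> Y \<in> L (Suc t) \<Longrightarrow> Y' \<in> L (Suc t) \<Longrightarrow> AE x in M. Y x \<le> Y' x \<Longrightarrow> AE x in M. U t Y x \<le> U t Y' x"
  using UU unfolding dyn_utility_def by blast
lemma U_hom: "t < T \<Longrightarrow> Y \<in> L (Suc t) \<Longrightarrow> c \<in> Lp_pos M (F t) p \<Longrightarrow> (\<lambda>y. c y * Y y) \<in> L (Suc t) \<Longrightarrow> AE x in M. U t (\<lambda>y. c y * Y y) x = c x * U t Y x"
  using UU unfolding dyn_utility_def by blast
lemma U_cong: assumes "t < T" "Y \<in> L (Suc t)" "Y' \<in> L (Suc t)" "AE x in M. Y x = Y' x"
  shows "AE x in M. U t Y x = U t Y' x"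
proof -
  have "AE x in M. U t Y x \<le> U t Y' x" using assms by (intro U_mono) (auto elim: eventually_mono)
  moreover have "AE x in M. U t Y' x \<le> U t Y x" using assms by (intro U_mono) (auto elim: eventually_mono)
  ultimately show ?thesis by eventually_elim auto
qed

abbreviation W where "W \<equiv> CoC_W R U \<eta>"

definition D where "D t Y = (\<lambda>y. max (R t (\<lambda>z. - Y z) y - Y y) 0)"

lemma W_eq: "W t Y = (\<lambda>x. R t (\<lambda>y. - Y y) x - 1 / (1 + \<eta> t x) * U t (D t Y) x)"
  unfolding CoC_W_def D_def by (rule refl)

lemma D_L: assumes t: "t < T" and Y: "Y \<in> L (Suc t)" shows "D t Y \<in> L (Suc t)"
proof -
  have "R t (\<lambda>z. - Y z) \<in> L t" using t Y L_neg[of "Suc t" Y] R_L by simp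
  then have "R t (\<lambda>z. - Y z) \<in> L (Suc t)" using t L_lift[of t "Suc t"] by simp
  then have "(\<lambda>y. R t (\<lambda>z. - Y z) y - Y y) \<in> L (Suc t)" using t Y L_diff[of "Suc t"] by simp
  then show ?thesis unfolding D_def using t L_max0[of "Suc t"] by simp
qed

lemma W_L: assumes t: "t < T" and Y: "Y \<in> L (Suc t)" shows "W t Y \<in> L t"
proof -
  have Z: "R t (\<lambda>z. - Y z) \<in> L t" using t Y L_neg[of "Suc t" Y] R_L by simp
  have UD: "U t (D t Y) \<in> L t" using t U_L D_L Y by simp
  have me: "\<eta> t \<in> borel_measurable (F t)" using ETA t by auto
  have mU: "U t (D t Y) \<in> borel_measurable (F t)" using UD by (rule L_meas)
  have "(\<lambda>x. 1 / (1 + \<eta> t x) * U t (D t Y) x) \<in> L t"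
  proof (rule L_dom[OF _ _ UD])
    show "t \<le> T" using t by simp
    show "(\<lambda>x. 1 / (1 + \<eta> t x) * U t (D t Y) x) \<in> borel_measurable (F t)" using me mU by measurable
    have "AE x in M. \<eta> t x > 0" using ETA t by auto
    then show "AE x in M. \<bar>1 / (1 + \<eta> t x) * U t (D t Y) x\<bar> \<le> \<bar>U t (D t Y) x\<bar>"
    proof eventually_elim
      case (elim x)
      then have "\<bar>1 + \<eta> t x\<bar> \<ge> 1" by simp
      then show ?case by (simp add: divide_le_eq mult_le_cancel_left1)
    qed
  qed
  then show ?thesis unfolding W_eq using Z t L_diff[of t] by simp
qed

lemma NY_L: "t < T \<Longrightarrow> Y \<in> L (Suc t) \<Longrightarrow> (\<lambda>z. - Y z) \<in> L (Suc t)"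
  using L_neg[of "Suc t" Y] by simp

lemma Z_L: assumes "t < T" "Y \<in> L (Suc t)" shows "R t (\<lambda>z. - Y z) \<in> L t" "R t (\<lambda>z. - Y z) \<in> L (Suc t)"
proof -
  show "R t (\<lambda>z. - Y z) \<in> L t" using assms NY_L R_L by simp
  then show "R t (\<lambda>z. - Y z) \<in> L (Suc t)" using assms L_lift[of t "Suc t"] by simp
qed

lemma W_cong:
  assumes t: "t < T" and Y: "Y \<in> L (Suc t)" and Y': "Y' \<in> L (Suc t)" and e: "AE x in M. Y x = Y' x"
  shows "AE x in M. W t Y x = W t Y' x"
proof -
  have "AE x in M. - Y x = - Y' x" using e by eventually_elim simp
  then have Ze: "AE x in M. R t (\<lambda>z. - Y z) x = R t (\<lambda>z. - Y' z) x"
    using R_cong[OF t NY_L[OF t Y] NY_L[OF t Y']] by simp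
  have "AE x in M. D t Y x = D t Y' x" using Ze e unfolding D_def by eventually_elim simp
  then have Ue: "AE x in M. U t (D t Y) x = U t (D t Y') x"
    using U_cong[OF t D_L[OF t Y] D_L[OF t Y']] by simp
  show ?thesis unfolding W_eq using Ze Ue by eventually_elim simp
qed

lemma W_trans:
  assumes t: "t < T" and Y: "Y \<in> L (Suc t)" and c: "c \<in> L t"
  shows "AE x in M. W t (\<lambda>y. Y y + c y) x = W t Y x + c x"
proof -
  have c': "c \<in> L (Suc t)" using c t L_lift[of t "Suc t"] by simp
  have Yc: "(\<lambda>y. Y y + c y) \<in> L (Suc t)" using L_add[of "Suc t" Y c] t Y c' by simp
  have nc: "(\<lambda>z. - c z) \<in> L t" using L_neg[of t c] t c by simp
  have ext1: "(\<lambda>z. - (Y z + c z)) = (\<lambda>z. (- Y z) + (- c z))" by simp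
  have Ze: "AE x in M. R t (\<lambda>z. - (Y z + c z)) x = R t (\<lambda>z. - Y z) x + c x"
    using R_trans[OF t NY_L[OF t Y] nc] unfolding ext1 by simp
  have "AE x in M. D t (\<lambda>y. Y y + c y) x = D t Y x" using Ze unfolding D_def by eventually_elim simp
  then have Ue: "AE x in M. U t (D t (\<lambda>y. Y y + c y)) x = U t (D t Y) x"
    using U_cong[OF t D_L[OF t Yc] D_L[OF t Y]] by simp
  show ?thesis unfolding W_eq using Ze Ue by eventually_elim (simp add: algebra_simps)
qed

lemma W_hom:
  assumes t: "t < T" and Y: "Y \<in> L (Suc t)" and a: "a \<in> Lp_pos M (F t) p"
    and aY: "(\<lambda>y. a y * Y y) \<in> L (Suc t)"
  shows "AE x in M. W t (\<lambda>y. a y * Y y) x = a x * W t Y x"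
proof -
  have aL: "a \<in> L t" and a0: "AE x in M. 0 \<le> a x" using a unfolding Lp_pos_def by auto
  have ext1: "(\<lambda>z. - (a z * Y z)) = (\<lambda>z. a z * (- Y z))" by simp
  have naY: "(\<lambda>z. a z * (- Y z)) \<in> L (Suc t)" using NY_L[OF t aY] unfolding ext1 .
  have Ze: "AE x in M. R t (\<lambda>z. - (a z * Y z)) x = a x * R t (\<lambda>z. - Y z) x"
    using R_hom[OF t NY_L[OF t Y] a naY] unfolding ext1 .
  have ma: "a \<in> borel_measurable (F (Suc t))" using meas_sub[of t "Suc t"] t L_meas[OF aL] by simp
  have mD: "D t Y \<in> borel_measurable (F (Suc t))" using L_meas[OF D_L[OF t Y]] .
  have De: "AE x in M. a x * D t Y x = D t (\<lambda>y. a y * Y y) x"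
    using Ze a0 unfolding D_def
  proof eventually_elim
    case (elim x)
    have "a x * max (R t (\<lambda>z. - Y z) x - Y x) 0 = max (a x * (R t (\<lambda>z. - Y z) x - Y x)) 0"
      using elim(2) by (simp add: max_def mult_le_0_iff)
    then show ?case using elim by (simp add: algebra_simps)
  qed
  have aDL: "(\<lambda>x. a x * D t Y x) \<in> L (Suc t)"
    using L_ae[of "Suc t" "\<lambda>x. a x * D t Y x" "D t (\<lambda>y. a y * Y y)"] t ma mD D_L[OF t aY] De
    by simp
  have Ue1: "AE x in M. U t (D t (\<lambda>y. a y * Y y)) x = U t (\<lambda>x. a x * D t Y x) x"
    using U_cong[OF t D_L[OF t aY] aDL] De by (simp add: eq_commute)
  have Ue2: "AE x in M. U t (\<lambda>x. a x * D t Y x) x = a x * U t (D t Y) x"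
    using U_hom[OF t D_L[OF t Y] a aDL] .
  show ?thesis unfolding W_eq using Ze Ue1 Ue2 by eventually_elim (simp add: algebra_simps)
qed

lemma W_mono:
  assumes t: "t < T" and Y: "Y \<in> L (Suc t)" and Y': "Y' \<in> L (Suc t)" and le: "AE x in M. Y x \<le> Y' x"
  shows "AE x in M. W t Y x \<le> W t Y' x"
proof -
  define Z where "Z = R t (\<lambda>z. - Y z)"
  define Z' where "Z' = R t (\<lambda>z. - Y' z)"
  have ZL: "Z \<in> L t" "Z \<in> L (Suc t)" unfolding Z_def using Z_L[OF t Y] by auto
  have ZL': "Z' \<in> L t" "Z' \<in> L (Suc t)" unfolding Z'_def using Z_L[OF t Y'] by auto
  have "AE x in M. - Y' x \<le> - Y x" using le by eventually_elim simp
  then have ZZ: "AE x in M. Z x \<le> Z' x" unfolding Z_def Z'_def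
    using R_mono[OF t NY_L[OF t Y'] NY_L[OF t Y]] by simp
  define nm where "nm = (\<lambda>y. - min (Y y) (Z y))"
  define nm' where "nm' = (\<lambda>y. - min (Y' y) (Z' y))"
  have nmL: "nm \<in> L (Suc t)" unfolding nm_def
    using L_neg[OF _ L_min[OF _ Y ZL(2)]] t by simp
  have nmL': "nm' \<in> L (Suc t)" unfolding nm'_def
    using L_neg[OF _ L_min[OF _ Y' ZL'(2)]] t by simp
  have DY: "D t Y = (\<lambda>y. nm y + Z y)" unfolding D_def nm_def Z_def by (auto simp: max_def min_def)
  have DY': "D t Y' = (\<lambda>y. nm' y + Z' y)" unfolding D_def nm'_def Z'_def by (auto simp: max_def min_def)
  have U1: "AE x in M. U t (D t Y) x = U t nm x + Z x" unfolding DY using U_trans[OF t nmL ZL(1)] .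
  have U2: "AE x in M. U t (D t Y') x = U t nm' x + Z' x" unfolding DY' using U_trans[OF t nmL' ZL'(1)] .
  have "AE x in M. nm' x \<le> nm x" using le ZZ unfolding nm_def nm'_def by eventually_elim auto
  then have U3: "AE x in M. U t nm' x \<le> U t nm x" using U_mono[OF t nmL' nmL] by simp
  have eta: "AE x in M. \<eta> t x > 0" using ETA t by auto
  show ?thesis unfolding W_eq Z_def[symmetric] Z'_def[symmetric] using U1 U2 U3 ZZ eta
  proof eventually_elim
    case (elim x)
    define k where "k = 1 / (1 + \<eta> t x)"
    have k0: "0 \<le> k" and k1: "k \<le> 1" using elim(5) unfolding k_def by auto
    have "k * ((U t nm' x - U t nm x) + (Z' x - Z x)) \<le> k * (Z' x - Z x)"
      using elim(3) k0 by (simp add: mult_left_mono)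
    also have "\<dots> \<le> Z' x - Z x" using k0 k1 elim(4) by (intro mult_left_le_one_le) auto
    finally have "k * ((U t nm' x - U t nm x) + (Z' x - Z x)) \<le> Z' x - Z x" .
    then show ?case unfolding elim(1) elim(2) k_def[symmetric] by (simp add: algebra_simps)
  qed
qed

definition G where "G k Y = foldr W [k..<T] Y"

lemma G_T: "G T Y = Y" unfolding G_def by simp
lemma G_step: "k < T \<Longrightarrow> G k Y = W k (G (Suc k) Y)" unfolding G_def by (simp add: upt_conv_Cons)

lemma G_L: assumes Y: "Y \<in> L T" shows "k \<le> T \<Longrightarrow> G k Y \<in> L k"
proof (induction k rule: inc_induct)
  case base then show ?case using Y G_T by simp
next
  case (step n) then show ?case using G_step W_L by simp
qed

lemma G_cong: assumes Y: "Y \<in> L T" and Y': "Y' \<in> L T" and e: "AE x in M. Y x = Y' x"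
  shows "k \<le> T \<Longrightarrow> AE x in M. G k Y x = G k Y' x"
proof (induction k rule: inc_induct)
  case base then show ?case using e G_T by simp
next
  case (step n)
  then show ?case using G_step[OF step(2)] W_cong[OF step(2) G_L[OF Y] G_L[OF Y']] by simp
qed

lemma G_mono: assumes Y: "Y \<in> L T" and Y': "Y' \<in> L T" and e: "AE x in M. Y x \<le> Y' x"
  shows "k \<le> T \<Longrightarrow> AE x in M. G k Y x \<le> G k Y' x"
proof (induction k rule: inc_induct)
  case base then show ?case using e G_T by simp
next
  case (step n)
  then show ?case using G_step[OF step(2)] W_mono[OF step(2) G_L[OF Y] G_L[OF Y']] by simp
qed

lemma G_trans: assumes k: "k \<le> T" and Y: "Y \<in> L T" and c: "c \<in> L k"
  shows "AE x in M. G k (\<lambda>y. Y y + c y) x = G k Y x + c x"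
proof -
  have cT: "c \<in> L T" using L_lift[OF k _ c] by simp
  have YcT: "(\<lambda>y. Y y + c y) \<in> L T" using L_add[OF _ Y cT] by simp
  have "AE x in M. G j (\<lambda>y. Y y + c y) x = G j Y x + c x" if "k \<le> j" "j \<le> T" for j
    using that(2)
  proof (induction j rule: inc_induct)
    case base then show ?case using G_T by simp
  next
    case (step n)
    have n: "n < T" using step by simp
    have cn: "c \<in> L n" using L_lift[of k n] that(1) step(1) n c by simp
    have cSn: "c \<in> L (Suc n)" using L_lift[of k "Suc n"] that(1) step(1) n c by simp
    have A: "G (Suc n) (\<lambda>y. Y y + c y) \<in> L (Suc n)" using G_L[OF YcT, of "Suc n"] n by simp
    have GSn: "G (Suc n) Y \<in> L (Suc n)" using G_L[OF Y, of "Suc n"] n by simp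
    have B: "(\<lambda>y. G (Suc n) Y y + c y) \<in> L (Suc n)" using L_add[OF _ GSn cSn] n by simp
    have "AE x in M. W n (G (Suc n) (\<lambda>y. Y y + c y)) x = W n (\<lambda>y. G (Suc n) Y y + c y) x"
      using W_cong[OF n A B step(3)] .
    moreover have "AE x in M. W n (\<lambda>y. G (Suc n) Y y + c y) x = W n (G (Suc n) Y) x + c x"
      using W_trans[OF n GSn cn] .
    ultimately show ?case unfolding G_step[OF n] by eventually_elim simp
  qed
  then show ?thesis using k by simp
qed

lemma G_hom: assumes k: "k \<le> T" and Y: "Y \<in> L T" and a: "a \<in> Lp_pos M (F k) p"
    and aY: "(\<lambda>y. a y * Y y) \<in> L T"
  shows "AE x in M. G k (\<lambda>y. a y * Y y) x = a x * G k Y x"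
proof -
  have aL: "a \<in> L k" and a0: "AE x in M. 0 \<le> a x" using a unfolding Lp_pos_def by auto
  have "AE x in M. G j (\<lambda>y. a y * Y y) x = a x * G j Y x" if "k \<le> j" "j \<le> T" for j
    using that(2)
  proof (induction j rule: inc_induct)
    case base then show ?case using G_T by simp
  next
    case (step n)
    have n: "n < T" using step by simp
    have an: "a \<in> Lp_pos M (F n) p" using L_lift[of k n] that(1) step(1) n aL a0
      unfolding Lp_pos_def by simp
    have ma: "a \<in> borel_measurable (F (Suc n))" using meas_sub[of k "Suc n"] that(1) step(1) n L_meas[OF aL] by simp
    have A: "G (Suc n) (\<lambda>y. a y * Y y) \<in> L (Suc n)" using G_L[OF aY, of "Suc n"] n by simp
    have GSn: "G (Suc n) Y \<in> L (Suc n)" using G_L[OF Y, of "Suc n"] n by simp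
    have mG: "G (Suc n) Y \<in> borel_measurable (F (Suc n))" using L_meas[OF GSn] .
    have B: "(\<lambda>y. a y * G (Suc n) Y y) \<in> L (Suc n)"
      using L_ae[of "Suc n" "\<lambda>y. a y * G (Suc n) Y y" "G (Suc n) (\<lambda>y. a y * Y y)"] n ma mG A step(3)
      by (simp add: eq_commute)
    have "AE x in M. W n (G (Suc n) (\<lambda>y. a y * Y y)) x = W n (\<lambda>y. a y * G (Suc n) Y y) x"
      using W_cong[OF n A B step(3)] .
    moreover have "AE x in M. W n (\<lambda>y. a y * G (Suc n) Y y) x = a x * W n (G (Suc n) Y) x"
      using W_hom[OF n GSn an B] .
    ultimately show ?case unfolding G_step[OF n] by eventually_elim simp
  qed
  then show ?thesis using k by simp
qed

definition S where "S t X = (\<lambda>x. \<Sum>u\<in>{Suc t..T}. X u x)"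

lemma V_G: "CoC_V R U \<eta> T X t = G t (S t X)"
  unfolding CoC_V_def G_def S_def by (rule refl)

lemma S_L: assumes "\<forall>s\<in>{1..T}. X s \<in> L s" shows "S t X \<in> L T"
  unfolding S_def
proof (rule L_sum)
  show "\<forall>u\<in>{Suc t..T}. X u \<in> L T" using assms L_lift by auto
qed auto

lemma V_rec: assumes k: "k < T" and X: "\<forall>s\<in>{1..T}. X s \<in> L s"
  shows "AE x in M. CoC_V R U \<eta> T X k x = W k (\<lambda>y. CoC_V R U \<eta> T X (Suc k) y + X (Suc k) y) x"
proof -
  have SS: "S k X = (\<lambda>y. S (Suc k) X y + X (Suc k) y)"
    unfolding S_def using k by (simp add: sum.atLeast_Suc_atMost add.commute)
  have XS: "X (Suc k) \<in> L (Suc k)" using X k by auto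
  have A: "G (Suc k) (S k X) \<in> L (Suc k)" using G_L[OF S_L[OF X], of "Suc k"] k by simp
  have GS: "G (Suc k) (S (Suc k) X) \<in> L (Suc k)" using G_L[OF S_L[OF X], of "Suc k"] k by simp
  have B: "(\<lambda>y. G (Suc k) (S (Suc k) X) y + X (Suc k) y) \<in> L (Suc k)" using L_add[OF _ GS XS] k by simp
  have "AE x in M. G (Suc k) (S k X) x = G (Suc k) (S (Suc k) X) x + X (Suc k) x"
    unfolding SS using G_trans[OF _ S_L[OF X] XS] k by simp
  then show ?thesis unfolding V_G G_step[OF k] using W_cong[OF k A B] by simp
qed

end

theorem proposition2:
  fixes M :: "'a measure" and F :: "nat \<Rightarrow> 'a measure" and T :: nat and p :: ennreal
    and R U :: "nat \<Rightarrow> ('a \<Rightarrow> real) \<Rightarrow> ('a \<Rightarrow> real)"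
    and \<eta> :: "nat \<Rightarrow> 'a \<Rightarrow> real"
    and X X' :: "nat \<Rightarrow> 'a \<Rightarrow> real"
  assumes "prob_space M"
    and "T \<ge> 1"
    and "finite_filtration M F T"
    and "dyn_risk_measure M F T p R"
    and "dyn_utility M F T p U"
    and "\<forall>t<T. \<eta> t \<in> borel_measurable (F t) \<and> (AE x in M. \<eta> t x > 0)"
    and "\<forall>s\<in>{1..T}. X s \<in> Lp M (F s) p"
    and "\<forall>s\<in>{1..T}. X' s \<in> Lp M (F s) p"
  shows
    "(\<forall>t<T.
        (\<forall>a\<in>Lp_pos M (F t) p.
           (\<forall>u\<in>{1..T}. (\<lambda>x. a x * X u x) \<in> Lp M (F u) p) \<longrightarrow>
           (AE x in M. CoC_V R U \<eta> T (\<lambda>u y. a y * X u y) t x = a x * CoC_V R U \<eta> T X t x)) \<and>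
        (\<forall>b. (\<forall>u\<in>{1..T}. b u \<in> Lp M (F t) p) \<longrightarrow>
           (AE x in M. CoC_V R U \<eta> T (\<lambda>u y. X u y + b u y) t x
                        = CoC_V R U \<eta> T X t x + (\<Sum>u\<in>{Suc t..T}. b u x))) \<and>
        ((\<forall>u\<in>{1..T}. AE x in M. X u x \<le> X' u x) \<longrightarrow>
           (AE x in M. CoC_V R U \<eta> T X t x \<le> CoC_V R U \<eta> T X' t x)))
     \<and>
     (\<forall>s t. s \<le> t \<and> t \<le> T \<and>
        (\<forall>u\<in>{1..t}. AE x in M. X u x = X' u x) \<and>
        (AE x in M. CoC_V R U \<eta> T X t x \<le> CoC_V R U \<eta> T X' t x) \<longrightarrow>
        (AE x in M. CoC_V R U \<eta> T X s x \<le> CoC_V R U \<eta> T X' s x))"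
proof -
  interpret coc M F T p R U \<eta>
    using assms(3-6) by unfold_locales
  have X: "\<forall>s\<in>{1..T}. X s \<in> L s" and X': "\<forall>s\<in>{1..T}. X' s \<in> L s" using assms(7,8) by auto
  have part1: "(\<forall>a\<in>Lp_pos M (F t) p.
           (\<forall>u\<in>{1..T}. (\<lambda>x. a x * X u x) \<in> Lp M (F u) p) \<longrightarrow>
           (AE x in M. CoC_V R U \<eta> T (\<lambda>u y. a y * X u y) t x = a x * CoC_V R U \<eta> T X t x)) \<and>
        (\<forall>b. (\<forall>u\<in>{1..T}. b u \<in> Lp M (F t) p) \<longrightarrow>
           (AE x in M. CoC_V R U \<eta> T (\<lambda>u y. X u y + b u y) t x
                        = CoC_V R U \<eta> T X t x + (\<Sum>u\<in>{Suc t..T}. b u x))) \<and>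
        ((\<forall>u\<in>{1..T}. AE x in M. X u x \<le> X' u x) \<longrightarrow>
           (AE x in M. CoC_V R U \<eta> T X t x \<le> CoC_V R U \<eta> T X' t x))" if t: "t < T" for t
  proof (intro conjI ballI allI impI)
    fix a assume a: "a \<in> Lp_pos M (F t) p" and aX: "\<forall>u\<in>{1..T}. (\<lambda>x. a x * X u x) \<in> Lp M (F u) p"
    have e: "S t (\<lambda>u y. a y * X u y) = (\<lambda>y. a y * S t X y)"
      unfolding S_def by (simp add: sum_distrib_left)
    have "S t (\<lambda>u y. a y * X u y) \<in> L T" using S_L[of "\<lambda>u y. a y * X u y"] aX by simp
    then have "(\<lambda>y. a y * S t X y) \<in> L T" unfolding e .
    then show "AE x in M. CoC_V R U \<eta> T (\<lambda>u y. a y * X u y) t x = a x * CoC_V R U \<eta> T X t x"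
      unfolding V_G e using G_hom[OF _ S_L[OF X] a] t by simp
  next
    fix b assume b: "\<forall>u\<in>{1..T}. b u \<in> Lp M (F t) p"
    have e: "S t (\<lambda>u y. X u y + b u y) = (\<lambda>y. S t X y + (\<Sum>u\<in>{Suc t..T}. b u y))"
      unfolding S_def by (simp add: sum.distrib)
    have c: "(\<lambda>y. \<Sum>u\<in>{Suc t..T}. b u y) \<in> L t" using L_sum[of t "{Suc t..T}" b] t b by auto
    show "AE x in M. CoC_V R U \<eta> T (\<lambda>u y. X u y + b u y) t x
                        = CoC_V R U \<eta> T X t x + (\<Sum>u\<in>{Suc t..T}. b u x)"
      unfolding V_G e using G_trans[OF _ S_L[OF X] c] t by simp
  next
    assume le: "\<forall>u\<in>{1..T}. AE x in M. X u x \<le> X' u x"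
    have "AE x in M. \<forall>u\<in>{1..T}. X u x \<le> X' u x" using le by (intro AE_finite_allI) auto
    then have "AE x in M. S t X x \<le> S t X' x" unfolding S_def
      by eventually_elim (auto intro!: sum_mono)
    then show "AE x in M. CoC_V R U \<eta> T X t x \<le> CoC_V R U \<eta> T X' t x"
      unfolding V_G using G_mono[OF S_L[OF X] S_L[OF X']] t by simp
  qed
  have part2: "AE x in M. CoC_V R U \<eta> T X s x \<le> CoC_V R U \<eta> T X' s x"
    if st: "s \<le> t" "t \<le> T" and eq: "\<forall>u\<in>{1..t}. AE x in M. X u x = X' u x"
      and le: "AE x in M. CoC_V R U \<eta> T X t x \<le> CoC_V R U \<eta> T X' t x" for s t
    using st(1)
  proof (induction s rule: inc_induct)
    case base then show ?case using le by simp
  next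
    case (step n)
    have n: "n < T" using step st by simp
    have VL: "CoC_V R U \<eta> T X (Suc n) \<in> L (Suc n)" "CoC_V R U \<eta> T X' (Suc n) \<in> L (Suc n)"
      unfolding V_G using G_L[OF S_L[OF X], of "Suc n"] G_L[OF S_L[OF X'], of "Suc n"] n by auto
    have XS: "X (Suc n) \<in> L (Suc n)" "X' (Suc n) \<in> L (Suc n)" using X X' n by auto
    have A: "(\<lambda>y. CoC_V R U \<eta> T X (Suc n) y + X (Suc n) y) \<in> L (Suc n)"
      using L_add[OF _ VL(1) XS(1)] n by simp
    have B: "(\<lambda>y. CoC_V R U \<eta> T X' (Suc n) y + X' (Suc n) y) \<in> L (Suc n)"
      using L_add[OF _ VL(2) XS(2)] n by simp
    have "AE x in M. X (Suc n) x = X' (Suc n) x" using eq step by auto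
    then have "AE x in M. CoC_V R U \<eta> T X (Suc n) x + X (Suc n) x \<le> CoC_V R U \<eta> T X' (Suc n) x + X' (Suc n) x"
      using step(3) by eventually_elim simp
    then have "AE x in M. W n (\<lambda>y. CoC_V R U \<eta> T X (Suc n) y + X (Suc n) y) x
               \<le> W n (\<lambda>y. CoC_V R U \<eta> T X' (Suc n) y + X' (Suc n) y) x"
      using W_mono[OF n A B] by simp
    then show ?case using V_rec[OF n X] V_rec[OF n X'] by eventually_elim simp
  qed
  show ?thesis using part1 part2 by blast
qed

end
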